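(* Let $k\ge 1$ be an integer with $4\nmid k$ such that $\mathcal{D}:=(k^2+4)/\gcd(2,k)^2$ is squarefree, let $\alpha=\frac{k+\sqrt{k^2+4}}{2}$, $\beta=\frac{k-\sqrt{k^2+4}}{2}$, let $p\ge 3$ be a prime and $\mathcal{F}_p(x)=x^{2p}-kx^p-1$. Then $\mathcal{F}_p(\beta)\equiv 0 \pmod{p^2}$ if and only if $\mathcal{F}_p(\alpha)\equiv 0\pmod{p^2}$.
   Context: Congruences are taken in the ring of algebraic integers of $\mathbb{Q}(\sqrt{k^2+4})$: $x\equiv y\pmod{m}$ means $(x-y)/m$ is an algebraic integer. *)

theory Defs
  imports "HOL-Computational_Algebra.Computational_Algebra"
begin

text \<open>All numbers involved lie in the real quadratic field Q(sqrt(k^2+4)), so this is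
  congruence in its ring of integers.\<close>
definition alg_cong :: "real \<Rightarrow> real \<Rightarrow> real \<Rightarrow> bool" where
  "alg_cong x y m \<longleftrightarrow> algebraic_int ((x - y) / m)"

definition calF :: "int \<Rightarrow> nat \<Rightarrow> real \<Rightarrow> real" where
  "calF k p x = x ^ (2 * p) - of_int k * x ^ p - 1"

end

theory Submission
  imports Defs
begin

lemma conj_poly:
  fixes q :: "real poly" and s u v :: real
  assumes "\<forall>i. coeff q i \<in> \<rat>" "u \<in> \<rat>" "v \<in> \<rat>" "s^2 \<in> \<rat>"
  shows "\<exists>A\<in>\<rat>. \<exists>B\<in>\<rat>. poly q (u + v*s) = A + B*s \<and> poly q (u - v*s) = A - B*s"
  using assms(1)
proof (induction q rule: pCons_induct)
  case 0
  then show ?case by (intro bexI[of _ 0]) auto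
next
  case (pCons a q)
  have a: "a \<in> \<rat>" using pCons.prems by (metis coeff_pCons_0)
  have "\<forall>i. coeff q i \<in> \<rat>" using pCons.prems by (metis coeff_pCons_Suc)
  then obtain A B where AB: "A \<in> \<rat>" "B \<in> \<rat>" "poly q (u + v*s) = A + B*s" "poly q (u - v*s) = A - B*s"
    using pCons.IH by blast
  have e1: "poly (pCons a q) (u + v*s) = (a + u*A + v*B*s^2) + (u*B + v*A)*s"
    by (simp only: poly_pCons AB(3)) (simp add: algebra_simps power2_eq_square)
  have e2: "poly (pCons a q) (u - v*s) = (a + u*A + v*B*s^2) - (u*B + v*A)*s"
    by (simp only: poly_pCons AB(4)) (simp add: algebra_simps power2_eq_square)
  show ?case
    apply (rule bexI[of _ "a + u*A + v*B*s^2"], rule bexI[of _ "u*B + v*A"])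
    using e1 e2 a AB assms by auto
qed

lemma conj_algint:
  fixes s A B :: real
  assumes "s \<notin> \<rat>" "s^2 \<in> \<rat>" "A \<in> \<rat>" "B \<in> \<rat>" "algebraic_int (A + B*s)"
  shows "algebraic_int (A - B*s)"
proof -
  from assms(5) obtain q where q: "lead_coeff q = 1" "\<forall>i. coeff q i \<in> \<int>" "poly q (A + B*s) = 0"
    by (auto elim: algebraic_int.cases)
  have "\<forall>i. coeff q i \<in> \<rat>" using q(2) Ints_subset_Rats by blast
  then obtain C D where CD: "C \<in> \<rat>" "D \<in> \<rat>" "poly q (A + B*s) = C + D*s" "poly q (A - B*s) = C - D*s"
    using conj_poly[OF _ assms(3,4,2)] by blast
  have "D = 0"
  proof (rule ccontr)
    assume "D \<noteq> 0"
    then have "s = - C / D" using CD(3) q(3) by (simp add: field_simps)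
    then have "s \<in> \<rat>" using CD by simp
    then show False using assms(1) by simp
  qed
  then have "C = 0" using CD(3) q(3) by simp
  then have "poly q (A - B*s) = 0" using CD(4) \<open>D = 0\<close> by simp
  then show ?thesis using q by (intro algebraic_int.intros)
qed

lemma sqrt_irr:
  fixes k :: int
  assumes "k \<ge> 1"
  shows "sqrt (of_int k^2 + 4) \<notin> \<rat>"
proof
  assume r: "sqrt (of_int k^2 + 4) \<in> \<rat>"
  have "algebraic_int (sqrt (of_int (k^2 + 4)))" by (intro algebraic_int_sqrt algebraic_int_of_int)
  then have "sqrt (of_int k^2 + 4) \<in> \<int>" using r rational_algebraic_int_is_int by simp
  then obtain n where n: "sqrt (of_int k^2 + 4) = of_int n" by (auto elim: Ints_cases)
  have "n \<ge> 0" using n by (metis of_int_0_le_iff real_sqrt_ge_zero add_nonneg_nonneg zero_le_power2 zero_le_numeral)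
  have "(of_int n :: real)^2 = of_int k^2 + 4" using n[symmetric] by simp
  then have nk: "n^2 = k^2 + 4" by (metis of_int_eq_iff of_int_add of_int_power of_int_numeral)
  have "k < n" proof (rule ccontr)
    assume "\<not> k < n" then have "n \<le> k" by simp
    then have "n^2 \<le> k^2" using \<open>n \<ge> 0\<close> by (simp add: power_mono)
    then show False using nk by simp
  qed
  then have "k + 1 \<le> n" by simp
  then have "(k+1)^2 \<le> n^2" using assms by (simp add: power_mono)
  then have "k = 1" using nk assms by (simp add: power2_eq_square algebra_simps)
  then have "n^2 = 5" using nk by simp
  moreover have "n \<le> 2 \<or> n \<ge> 3" by auto
  ultimately show False
  proof -
    assume h: "n^2 = 5" "n \<le> 2 \<or> n \<ge> 3"
    { assume "n \<le> 2" then have "n^2 \<le> 2^2" using \<open>n \<ge> 0\<close> by (intro power_mono) auto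
      then have False using h by simp }
    moreover { assume "n \<ge> 3" then have "3^2 \<le> n^2" by (intro power_mono) auto
      then have False using h by simp }
    ultimately show False using h by blast
  qed
qed

theorem lemma3p3:
  fixes k :: int and p :: nat
  assumes "k \<ge> 1" and "\<not> (4 dvd k)"
    and "squarefree ((k^2 + 4) div (gcd 2 k)^2)"
    and "prime p" and "p \<ge> 3"
  shows "alg_cong (calF k p ((of_int k - sqrt (of_int k^2 + 4)) / 2)) 0 (of_nat p ^ 2)
     \<longleftrightarrow> alg_cong (calF k p ((of_int k + sqrt (of_int k^2 + 4)) / 2)) 0 (of_nat p ^ 2)"
proof -
  define s where "s = sqrt (of_int k^2 + 4 :: real)"
  have sirr: "s \<notin> \<rat>" unfolding s_def using sqrt_irr[OF assms(1)] .
  have s2: "s^2 \<in> \<rat>" unfolding s_def by simp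
  define Q :: "real poly" where "Q = smult (1 / of_nat p ^ 2)
      (monom 1 (2*p) - monom (of_int k) p - 1)"
  have Qc: "\<forall>i. coeff Q i \<in> \<rat>" unfolding Q_def by (auto simp: coeff_monom)
  have PQ: "poly Q x = calF k p x / of_nat p ^ 2" for x
    unfolding Q_def calF_def by (simp add: poly_monom)
  obtain A B where AB: "A \<in> \<rat>" "B \<in> \<rat>"
    "poly Q (of_int k / 2 + (1/2)*s) = A + B*s" "poly Q (of_int k / 2 - (1/2)*s) = A - B*s"
    using conj_poly[OF Qc _ _ s2, of "of_int k / 2" "1/2"] by auto
  have e1: "(of_int k + s)/2 = of_int k / 2 + (1/2)*s" "(of_int k - s)/2 = of_int k / 2 - (1/2)*s"
    by (simp_all add: field_simps)
  have X: "calF k p ((of_int k - s) / 2) / of_nat p ^ 2 = A - B*s"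
    using AB(4) PQ e1 by metis
  have Y: "calF k p ((of_int k + s) / 2) / of_nat p ^ 2 = A + B*s"
    using AB(3) PQ e1 by metis
  have "algebraic_int (A - B*s) \<longleftrightarrow> algebraic_int (A + B*s)"
  proof
    assume "algebraic_int (A - B*s)"
    then have "algebraic_int (A + (-B)*s)" by simp
    then have "algebraic_int (A - (-B)*s)" using conj_algint[OF sirr s2 AB(1), of "-B"] AB(2) by simp
    then show "algebraic_int (A + B*s)" by simp
  qed (rule conj_algint[OF sirr s2 AB(1,2)])
  then show ?thesis unfolding alg_cong_def s_def[symmetric] using X Y by simp
qed

end
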